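(* Let $p$ and $q$ be distinct primes and let $a,b$ be positive integers. Then \[ B(p^{a}q^{b}) \;\ge\; \min\{p^{a},\,q^{b}\}. \]
   Context: The height $H(f)$ of a polynomial $f\in\mathbb{Z}[x]$ is the maximum of the absolute values of its coefficients. For a positive integer $n$, $B(n)=\max\{H(f): f\in\mathbb{Z}[x],\ f \text{ divides } x^n-1 \text{ in } \mathbb{Z}[x]\}$. *)

theory Defs
  imports "HOL-Computational_Algebra.Polynomial"
begin

definition height :: "int poly \<Rightarrow> int" where
  "height f = Max {\<bar>coeff f i\<bar> | i. i \<le> degree f}"

definition B :: "nat \<Rightarrow> int" where
  "B n = Max {height f | f. f dvd (monom 1 n - 1 :: int poly)}"

end

theory Submission
  imports Defs "Berlekamp_Zassenhaus.Factor_Bound" "HOL-Number_Theory.Cong"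
begin

hide_const (open) UnivPoly.coeff UnivPoly.monom Unique_Factorization.comm_monoid_mult_class.coprime Mahler_Measure.height

definition G :: "nat \<Rightarrow> int poly" where "G k = (\<Sum>i<k. [:0,1:] ^ i)"

lemma monom_X: "Polynomial.monom (1::int) n = [:0,1:] ^ n"
  by (simp add: monom_altdef)

lemma coeff_G: "coeff (G k) j = (if j < k then 1 else 0)"
  by (simp add: G_def coeff_sum monom_altdef[of 1, simplified, symmetric] coeff_monom)

lemma G_geom: "[:0,1:] ^ k - 1 = ([:0,1:] - 1) * G k"
  unfolding G_def by (rule power_diff_1_eq)

lemma G_dvd_Xpow: "G k dvd [:0,1:] ^ k - 1"
  using G_geom by (metis dvd_triv_right)

lemma G_dvd_shift:
  assumes "P > 0"
  shows "G P dvd [:0,1:] ^ k - [:0,1:] ^ (k mod P)"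
proof -
  let ?x = "[:0,1:] :: int poly"
  have e: "?x ^ k - ?x ^ (k mod P) = ?x ^ (k mod P) * ((?x ^ P) ^ (k div P) - 1)"
    by (simp add: algebra_simps flip: power_mult power_add)
  have "?x ^ P - 1 dvd (?x ^ P) ^ (k div P) - 1"
    using power_diff_1_eq[of "?x ^ P" "k div P"] by (metis dvd_triv_left)
  hence "G P dvd (?x ^ P) ^ (k div P) - 1"
    using G_dvd_Xpow dvd_trans by blast
  thus ?thesis unfolding e by simp
qed

lemma bij_mod:
  fixes P Q :: nat
  assumes "coprime Q P" "P > 0"
  shows "bij_betw (\<lambda>i. (i * Q) mod P) {..<P} {..<P}"
proof -
  have inj: "inj_on (\<lambda>i. (i * Q) mod P) {..<P}"
  proof (rule inj_onI)
    fix i j assume i: "i \<in> {..<P}" and j: "j \<in> {..<P}" and h: "(i * Q) mod P = (j * Q) mod P"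
    hence "[i * Q = j * Q] (mod P)" by (simp add: cong_def)
    hence "[i = j] (mod P)" using cong_mult_rcancel_nat[OF assms(1)] by simp
    thus "i = j" using i j by (simp add: cong_def)
  qed
  have sub: "(\<lambda>i. (i * Q) mod P) ` {..<P} \<subseteq> {..<P}" using assms(2) by auto
  have "(\<lambda>i. (i * Q) mod P) ` {..<P} = {..<P}"
    using card_image[OF inj] sub by (intro card_subset_eq) auto
  thus ?thesis using inj by (simp add: bij_betw_def)
qed

lemma G_dvd_S:
  fixes P Q :: nat
  assumes "coprime Q P" "P > 0"
  shows "G P dvd (\<Sum>i<P. ([:0,1:] ^ Q) ^ i)"
proof -
  let ?x = "[:0,1:] :: int poly"
  have "(\<Sum>i<P. ?x ^ ((i * Q) mod P)) = (\<Sum>j<P. ?x ^ j)"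
    using sum.reindex_bij_betw[OF bij_mod[OF assms], of "\<lambda>j. ?x ^ j"] by simp
  hence T: "(\<Sum>i<P. ?x ^ ((i * Q) mod P)) = G P" by (simp add: G_def)
  have "G P dvd (\<Sum>i<P. ?x ^ (i * Q) - ?x ^ ((i * Q) mod P))"
    by (rule dvd_sum) (rule G_dvd_shift[OF assms(2)])
  hence "G P dvd (\<Sum>i<P. ?x ^ (i * Q)) - (\<Sum>i<P. ?x ^ ((i * Q) mod P))"
    by (simp only: sum_subtractf)
  hence "G P dvd (\<Sum>i<P. ?x ^ (i * Q)) - G P"
    unfolding T .
  hence "G P dvd (\<Sum>i<P. ?x ^ (i * Q))"
    by (metis diff_add_cancel dvd_add dvd_refl)
  moreover have "(\<Sum>i<P. ?x ^ (i * Q)) = (\<Sum>i<P. (?x ^ Q) ^ i)"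
    by (intro sum.cong refl) (simp add: power_mult[symmetric] mult.commute)
  ultimately show ?thesis by simp
qed

lemma main_dvd:
  fixes P Q :: nat
  assumes "coprime Q P" "P > 0"
  shows "G P * G Q dvd Polynomial.monom 1 (P * Q) - 1"
proof -
  let ?x = "[:0,1:] :: int poly"
  have "Polynomial.monom 1 (P * Q) - 1 = (?x ^ Q) ^ P - 1"
    by (simp add: monom_X mult.commute[of P Q] power_mult)
  also have "\<dots> = (?x ^ Q - 1) * (\<Sum>i<P. (?x ^ Q) ^ i)" by (rule power_diff_1_eq)
  also have "\<dots> = (?x - 1) * (G Q * (\<Sum>i<P. (?x ^ Q) ^ i))" by (subst G_geom) (simp add: mult.assoc)
  finally have "Polynomial.monom 1 (P * Q) - 1 = (?x - 1) * (G Q * (\<Sum>i<P. (?x ^ Q) ^ i))" .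
  moreover have "G P * G Q dvd G Q * (\<Sum>i<P. (?x ^ Q) ^ i)"
    using G_dvd_S[OF assms] by (simp add: mult.commute mult_dvd_mono)
  ultimately show ?thesis by (metis dvd_mult)
qed

lemma height_alt: "height g = Max ((\<lambda>i. \<bar>coeff g i\<bar>) ` {..degree g})"
  unfolding height_def by (rule arg_cong[where f=Max]) auto

lemma height_ge: "i \<le> degree g \<Longrightarrow> \<bar>coeff g i\<bar> \<le> height g"
  unfolding height_alt by (rule Max_ge) auto

lemma height_le: "(\<And>i. \<bar>coeff g i\<bar> \<le> M) \<Longrightarrow> height g \<le> M"
  unfolding height_alt by (rule Max.boundedI) auto

lemma B_ge:
  assumes "F = (Polynomial.monom 1 n - 1 :: int poly)" "n > 0" "f dvd F"
  shows "height f \<le> B n"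
proof -
  have "coeff F n = 1" using assms by simp
  hence F0: "F \<noteq> 0" by auto
  define M where "M = mignotte_bound F (degree F)"
  have "{height g | g. g dvd F} \<subseteq> {0..M}"
  proof
    fix h assume "h \<in> {height g | g. g dvd F}"
    then obtain g where g: "g dvd F" "h = height g" by auto
    have "degree g \<le> degree F" using dvd_imp_degree_le[OF g(1) F0] .
    hence "height g \<le> M" unfolding M_def
      by (intro height_le mignotte_bound[OF F0 g(1)])
    moreover have "0 \<le> height g" using height_ge[of 0 g] by simp
    ultimately show "h \<in> {0..M}" using g by auto
  qed
  hence fin: "finite {height g | g. g dvd F}" by (rule finite_subset) simp
  show ?thesis unfolding B_def assms(1)[symmetric]
    by (rule Max_ge[OF fin]) (use assms in auto)
qed

lemma coeff_GG:
  assumes "m < P" "m < Q"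
  shows "coeff (G P * G Q) m = int m + 1"
proof -
  have "coeff (G P * G Q) m = (\<Sum>i\<le>m. coeff (G P) i * coeff (G Q) (m - i))"
    by (rule coeff_mult)
  also have "\<dots> = (\<Sum>i\<le>m. 1)" using assms by (intro sum.cong) (auto simp: coeff_G)
  finally show ?thesis by simp
qed

theorem mainTheorem2:
  fixes p q a b :: nat
  assumes "prime p" and "prime q" and "p \<noteq> q" and "a > 0" and "b > 0"
  shows "B (p ^ a * q ^ b) \<ge> int (min (p ^ a) (q ^ b))"
proof -
  define P where "P = p ^ a"
  define Q where "Q = q ^ b"
  have cop: "coprime Q P" unfolding P_def Q_def using assms
    by (simp add: primes_coprime coprime_power_left_iff coprime_power_right_iff)
  have P0: "P > 0" "Q > 0" unfolding P_def Q_def using assms by (auto simp: prime_gt_0_nat)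
  define m where "m = min P Q - 1"
  have mP: "m < P" "m < Q" using P0 unfolding m_def by auto
  have c: "coeff (G P * G Q) m = int (min P Q)"
    using coeff_GG[OF mP] P0 unfolding m_def by simp
  have "int (min P Q) \<le> height (G P * G Q)"
  proof -
    have "coeff (G P * G Q) m \<noteq> 0" using c P0 by simp
    hence "m \<le> degree (G P * G Q)" by (rule le_degree)
    from height_ge[OF this] show ?thesis using c by simp
  qed
  also have "\<dots> \<le> B (P * Q)"
    by (rule B_ge[OF refl]) (use P0 main_dvd[OF cop P0(1)] in auto)
  finally show ?thesis unfolding P_def Q_def .
qed

end
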